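(* Let $f:\mathbb Z^m\to\mathbb R^N$ be a discrete isothermic net. Then there exists a function $s:\mathbb Z^m\to\mathbb R\setminus\{0\}$ such that for every elementary quadrilateral $(f,f_i,f_{ij},f_j)$ with diagonal intersection point $M$, $$\frac{l(M,f_{ij})}{l(M,f)}=\frac{s_{ij}}{s},\qquad \frac{l(M,f_j)}{l(M,f_i)}=\frac{s_j}{s_i};$$ $s$ is unique up to multiplication by a nonzero constant $\lambda$ on black points and a nonzero constant $\mu$ on white points. For any such $s$, the functions $\alpha_i=\dfrac{|f_i-f|^2}{s s_i}$ (assigned to the edge $(u,u+e_i)$) form an edge labelling, i.e. $\tau_j\alpha_i=\alpha_i$ for $j\ne i$, so that $$|f_i-f|^2=\alpha_i\, s s_i\qquad(i=1,\dots,m).$$ Replacing $s$ by $\lambda s$ on black points and $\mu s$ on white points replaces $\alpha$ by $(\lambda\mu)^{-1}\alpha$.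
   Context: Notation: for $f:\mathbb Z^m\to\mathbb R^N$, $f=f(u)$, $f_i=f(u+e_i)$, $f_{ij}=f(u+e_i+e_j)$ with $e_i$ the unit vectors, similarly for $s$; $\tau_j g(u)=g(u+e_j)$. A Q-net is a map such that each elementary quadrilateral $(f,f_i,f_{ij},f_j)$ ($i\ne j$) is planar, assumed non-degenerate (distinct vertices, no three collinear, diagonals meeting in a point $M$ distinct from the vertices). Two planar quadrilaterals $(A,B,C,D)$, $(A^*,B^*,C^*,D^* )$ are dual if $A^*B^*\parallel AB$, $B^*C^*\parallel BC$, $C^*D^*\parallel CD$, $D^*A^*\parallel DA$, $A^*C^*\parallel BD$, $B^*D^*\parallel AC$. A Q-net $f$ is a discrete Koenigs net if there is a Q-net $f^*$ with every $(f^*,f^*_i,f^*_{ij},f^*_j)$ dual to $(f,f_i,f_{ij},f_j)$. A circular net is a Q-net all of whose elementary quadrilaterals have their four vertices on a circle. A discrete isothermic net is a circular net which is a discrete Koenigs net. For collinear points $P,Q$, $l(P,Q)$ is the directed (signed) length along their line. A point $u$ is black if $u_1+\dots+u_m$ is even, white otherwise. An edge labelling is a system of real functions $\alpha_i$ on the edges parallel to the $i$-th axis, taking equal values on opposite edges of every elementary square. *)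

theory Defs
  imports "HOL-Analysis.Analysis"
begin

text \<open>Lattice points of Z^m are elements of int^'m (index type 'm finite, m = CARD('m));
  points of R^N are elements of real^'n.\<close>

definition unitv :: "'m::finite \<Rightarrow> int^'m" where
  "unitv i = axis i 1"

definition black :: "int^'m::finite \<Rightarrow> bool" where
  "black u \<longleftrightarrow> even (\<Sum>k\<in>UNIV. u $ k)"

definition diag_point :: "real^'n \<Rightarrow> real^'n \<Rightarrow> real^'n \<Rightarrow> real^'n \<Rightarrow> real^'n" where
  "diag_point A B C D = (THE M. M \<in> affine hull {A, C} \<and> M \<in> affine hull {B, D})"

definition nondeg_planar_quad :: "real^'n \<Rightarrow> real^'n \<Rightarrow> real^'n \<Rightarrow> real^'n \<Rightarrow> bool" where
  "nondeg_planar_quad A B C D \<longleftrightarrow>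
     aff_dim {A, B, C, D} \<le> 2 \<and>
     distinct [A, B, C, D] \<and>
     \<not> collinear {A, B, C} \<and> \<not> collinear {A, B, D} \<and>
     \<not> collinear {A, C, D} \<and> \<not> collinear {B, C, D} \<and>
     (\<exists>M. M \<in> affine hull {A, C} \<and> M \<in> affine hull {B, D} \<and> M \<notin> {A, B, C, D})"

definition Qnet :: "(int^'m::finite \<Rightarrow> real^'n) \<Rightarrow> bool" where
  "Qnet f \<longleftrightarrow> (\<forall>u i j. i \<noteq> j \<longrightarrow>
     nondeg_planar_quad (f u) (f (u + unitv i)) (f (u + unitv i + unitv j)) (f (u + unitv j)))"

definition par :: "real^'n \<Rightarrow> real^'n \<Rightarrow> bool" where
  "par v w \<longleftrightarrow> collinear {0, v, w}"

definition dual_quad :: "real^'n \<Rightarrow> real^'n \<Rightarrow> real^'n \<Rightarrow> real^'n \<Rightarrow>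
    real^'n \<Rightarrow> real^'n \<Rightarrow> real^'n \<Rightarrow> real^'n \<Rightarrow> bool" where
  "dual_quad A B C D A' B' C' D' \<longleftrightarrow>
     par (B' - A') (B - A) \<and> par (C' - B') (C - B) \<and> par (D' - C') (D - C) \<and>
     par (A' - D') (A - D) \<and> par (C' - A') (D - B) \<and> par (D' - B') (C - A)"

definition koenigs :: "(int^'m::finite \<Rightarrow> real^'n) \<Rightarrow> bool" where
  "koenigs f \<longleftrightarrow> Qnet f \<and> (\<exists>fs :: int^'m \<Rightarrow> real^'n. Qnet fs \<and>
     (\<forall>u i j. i \<noteq> j \<longrightarrow>
        dual_quad (f u) (f (u + unitv i)) (f (u + unitv i + unitv j)) (f (u + unitv j))
                  (fs u) (fs (u + unitv i)) (fs (u + unitv i + unitv j)) (fs (u + unitv j))))"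

definition concyclic :: "real^'n \<Rightarrow> real^'n \<Rightarrow> real^'n \<Rightarrow> real^'n \<Rightarrow> bool" where
  "concyclic A B C D \<longleftrightarrow> (\<exists>c r. c \<in> affine hull {A, B, C, D} \<and>
     dist c A = r \<and> dist c B = r \<and> dist c C = r \<and> dist c D = r)"

definition circular :: "(int^'m::finite \<Rightarrow> real^'n) \<Rightarrow> bool" where
  "circular f \<longleftrightarrow> Qnet f \<and> (\<forall>u i j. i \<noteq> j \<longrightarrow>
     concyclic (f u) (f (u + unitv i)) (f (u + unitv i + unitv j)) (f (u + unitv j)))"

definition isothermic :: "(int^'m::finite \<Rightarrow> real^'n) \<Rightarrow> bool" where
  "isothermic f \<longleftrightarrow> circular f \<and> koenigs f"

text \<open>Directed length l(P,Q) along a line oriented by the direction vector d.\<close>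
definition dlen :: "real^'n \<Rightarrow> real^'n \<Rightarrow> real^'n \<Rightarrow> real" where
  "dlen d P Q = ((Q - P) \<bullet> d) / norm d"

text \<open>The ratio conditions on s: for each elementary quadrilateral,
  l(M,f_ij)/l(M,f) = s_ij/s and l(M,f_j)/l(M,f_i) = s_j/s_i, each diagonal being oriented
  by one fixed direction (the ratio does not depend on this choice).\<close>
definition ratio_cond :: "(int^'m::finite \<Rightarrow> real^'n) \<Rightarrow> (int^'m \<Rightarrow> real) \<Rightarrow> bool" where
  "ratio_cond f s \<longleftrightarrow> (\<forall>u i j. i \<noteq> j \<longrightarrow>
     (let A = f u; B = f (u + unitv i); C = f (u + unitv i + unitv j); D = f (u + unitv j);
          M = diag_point A B C D
      in dlen (C - A) M C / dlen (C - A) M A = s (u + unitv i + unitv j) / s u \<and>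
         dlen (D - B) M D / dlen (D - B) M B = s (u + unitv j) / s (u + unitv i)))"

end

theory Submission
  imports Defs
begin


lemma unitv_nth: "unitv i $ k = (if k = i then 1 else 0)"
  by (simp add: unitv_def axis_def)

lemma black_add_unitv: "black (u + unitv i) \<longleftrightarrow> \<not> black u"
proof -
  have "(\<Sum>k\<in>UNIV. (u + unitv i) $ k) = (\<Sum>k\<in>UNIV. u $ k) + 1"
    by (simp add: unitv_nth sum.distrib)
  then show ?thesis unfolding black_def by simp
qed

definition iprod :: "(int \<Rightarrow> real) \<Rightarrow> int \<Rightarrow> real" where
  "iprod F n = (if n \<ge> 0 then (\<Prod>t<nat n. F (int t)) else inverse (\<Prod>t<nat (-n). F (- int t - 1)))"

lemma iprod_nz: "(\<And>n. F n \<noteq> 0) \<Longrightarrow> iprod F n \<noteq> 0"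
  by (simp add: iprod_def)

lemma iprod_step: "iprod F (n+1) = F n * iprod F n" if nz: "\<And>n. F n \<noteq> 0"
proof (cases "n \<ge> 0")
  case True
  then have "nat (n+1) = Suc (nat n)" by simp
  then show ?thesis using True by (simp add: iprod_def mult.commute)
next
  case False
  define m where "m = nat (-(n+1))"
  have e1: "nat (-n) = Suc m" using False unfolding m_def by simp
  have e2: "F (- int m - 1) = F n" using False unfolding m_def by (simp add: algebra_simps)
  have lhs: "iprod F (n+1) = inverse (\<Prod>t<m. F (- int t - 1))"
    unfolding iprod_def m_def using False by auto
  have "iprod F n = inverse ((\<Prod>t<m. F (- int t - 1)) * F n)"
    unfolding iprod_def using False e1 e2 by simp
  then show ?thesis using lhs nz[of n] by (simp add: field_simps)
qed

definition vupd :: "int^'m \<Rightarrow> 'm \<Rightarrow> int \<Rightarrow> int^'m" where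
  "vupd x k n = (\<chi> l. if l = k then n else x $ l)"

lemma integrate_K:
  fixes G :: "int^'m::finite \<Rightarrow> 'm \<Rightarrow> real"
  assumes nz: "\<And>x i. G x i \<noteq> 0"
    and cl: "\<And>x i j. G x i * G (x + unitv i) j = G x j * G (x + unitv j) i"
    and fin: "finite K"
  shows "\<exists>h. (\<forall>x. h x \<noteq> 0) \<and> (\<forall>x. \<forall>i\<in>K. h (x + unitv i) = G x i * h x)"
  using fin
proof (induction K rule: finite_induct)
  case empty
  show ?case by (rule exI[of _ "\<lambda>_. 1"]) simp
next
  case (insert k K)
  then obtain h where hnz: "\<And>x. h x \<noteq> 0" and hK: "\<And>x i. i \<in> K \<Longrightarrow> h (x + unitv i) = G x i * h x"
    by blast
  define H where "H x = G x k * h x / h (x + unitv k)" for x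
  have Hnz: "H x \<noteq> 0" for x using nz hnz unfolding H_def by simp
  have Hinv: "H (x + unitv i) = H x" if "i \<in> K" for x i
  proof -
    have ik: "i \<noteq> k" using that insert by auto
    have a: "h (x + unitv i) = G x i * h x" using hK that by blast
    have b: "h (x + unitv i + unitv k) = G (x + unitv k) i * h (x + unitv k)"
      using hK[OF that, of "x + unitv k"] by (simp add: add_ac)
    have c: "G x i * G (x + unitv i) k = G x k * G (x + unitv k) i" by (rule cl)
    show ?thesis unfolding H_def a b using nz hnz c
      by (simp add: field_simps)
  qed
  define \<phi> where "\<phi> x = iprod (\<lambda>n. H (vupd x k n)) (x $ k)" for x
  have upd_i: "vupd (x + unitv i) k n = vupd x k n + unitv i" if "i \<noteq> k" for x i n
    using that by (simp add: vupd_def vec_eq_iff unitv_nth)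
  have upd_k: "vupd (x + unitv k) k n = vupd x k n" for x n
    by (simp add: vupd_def vec_eq_iff unitv_nth)
  have upd_self: "vupd x k (x $ k) = x" for x
    by (simp add: vupd_def vec_eq_iff)
  have phi_i: "\<phi> (x + unitv i) = \<phi> x" if "i \<in> K" for x i
  proof -
    have ik: "i \<noteq> k" using that insert by auto
    have "(x + unitv i) $ k = x $ k" using ik by (simp add: unitv_nth)
    moreover have "(\<lambda>n. H (vupd (x + unitv i) k n)) = (\<lambda>n. H (vupd x k n))"
      using upd_i[OF ik] Hinv[OF that] by simp
    ultimately show ?thesis unfolding \<phi>_def by simp
  qed
  have phi_k: "\<phi> (x + unitv k) = H x * \<phi> x" for x
  proof -
    have "(x + unitv k) $ k = x $ k + 1" by (simp add: unitv_nth)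
    then have "\<phi> (x + unitv k) = iprod (\<lambda>n. H (vupd x k n)) (x $ k + 1)"
      unfolding \<phi>_def upd_k by simp
    also have "\<dots> = H x * \<phi> x" unfolding \<phi>_def
      by (subst iprod_step) (use Hnz upd_self in auto)
    finally show ?thesis .
  qed
  have phinz: "\<phi> x \<noteq> 0" for x unfolding \<phi>_def by (rule iprod_nz) (use Hnz in auto)
  show ?case
  proof (intro exI[of _ "\<lambda>x. h x * \<phi> x"] conjI allI ballI)
    fix x show "h x * \<phi> x \<noteq> 0" using hnz phinz by simp
  next
    fix x i assume "i \<in> insert k K"
    then consider "i = k" | "i \<in> K" by auto
    then show "h (x + unitv i) * \<phi> (x + unitv i) = G x i * (h x * \<phi> x)"
    proof cases
      case 1
      then show ?thesis using phi_k hnz unfolding H_def by (simp add: field_simps)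
    next
      case 2
      then show ?thesis using phi_i hK by simp
    qed
  qed
qed

lemma integrate:
  fixes G :: "int^'m::finite \<Rightarrow> 'm \<Rightarrow> real"
  assumes nz: "\<And>x i. G x i \<noteq> 0"
    and cl: "\<And>x i j. G x i * G (x + unitv i) j = G x j * G (x + unitv j) i"
  shows "\<exists>h. (\<forall>x. h x \<noteq> 0) \<and> (\<forall>x i. h (x + unitv i) = G x i * h x)"
  using integrate_K[OF nz cl, of UNIV] by auto



lemma in_hull2: "x \<in> affine hull {a, b} \<longleftrightarrow> (\<exists>t. x = a + t *\<^sub>R (b - a))"
  by (auto simp: affine_hull_2_alt)

lemma quad_diag:
  fixes A B C D :: "real^'n"
  assumes q: "nondeg_planar_quad A B C D"
  shows "\<exists>t r. diag_point A B C D = A + t *\<^sub>R (C - A) \<and> diag_point A B C D = B + r *\<^sub>R (D - B)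
     \<and> t \<noteq> 0 \<and> t \<noteq> 1 \<and> r \<noteq> 0 \<and> r \<noteq> 1
     \<and> (\<forall>p q. p *\<^sub>R (C - A) = q *\<^sub>R (D - B) \<longrightarrow> p = 0 \<and> q = 0)"
proof -
  from q have dist: "distinct [A, B, C, D]" and nc: "\<not> collinear {A, B, C}"
    and ex: "\<exists>M. M \<in> affine hull {A, C} \<and> M \<in> affine hull {B, D} \<and> M \<notin> {A, B, C, D}"
    unfolding nondeg_planar_quad_def by auto
  from ex obtain M t r where M1: "M = A + t *\<^sub>R (C - A)" and M2: "M = B + r *\<^sub>R (D - B)"
    and Mn: "M \<notin> {A, B, C, D}"
    unfolding in_hull2 by blast
  have t0: "t \<noteq> 0" using M1 Mn by auto
  have t1: "t \<noteq> 1" using M1 Mn by auto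
  have r0: "r \<noteq> 0" using M2 Mn by auto
  have r1: "r \<noteq> 1" using M2 Mn by auto
  have ind: "p = 0 \<and> q = 0" if pq: "p *\<^sub>R (C - A) = q *\<^sub>R (D - B)" for p q
  proof (cases "p = 0")
    case True
    then have "q *\<^sub>R (D - B) = 0" using pq by simp
    then show ?thesis using True dist by auto
  next
    case False
    have CA: "C - A = (q / p) *\<^sub>R (D - B)" using pq False
      by (metis (no_types, lifting) divide_inverse_commute pq scaleR_scaleR right_inverse scaleR_one mult.commute)
    have "B = A + t *\<^sub>R (C - A) - r *\<^sub>R (D - B)" using M1 M2 by (simp add: algebra_simps)
    also have "\<dots> = A + (t * (q / p) - r) *\<^sub>R (D - B)" unfolding CA by (simp add: algebra_simps)
    finally have Beq: "B = A + (t * (q / p) - r) *\<^sub>R (D - B)" .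
    have Ceq: "C = A + (q / p) *\<^sub>R (D - B)" using CA by (simp add: algebra_simps)
    have "collinear {A, B, C}"
      unfolding collinear_alt
      apply (rule exI[of _ A], rule exI[of _ "D - B"])
      using Beq Ceq by (auto intro: exI[of _ 0])
    with nc show ?thesis by simp
  qed
  have dp: "diag_point A B C D = M"
    unfolding diag_point_def
  proof (rule the_equality)
    show "M \<in> affine hull {A, C} \<and> M \<in> affine hull {B, D}"
      unfolding in_hull2 using M1 M2 by blast
  next
    fix M' assume "M' \<in> affine hull {A, C} \<and> M' \<in> affine hull {B, D}"
    then obtain t' r' where N1: "M' = A + t' *\<^sub>R (C - A)" and N2: "M' = B + r' *\<^sub>R (D - B)"
      unfolding in_hull2 by blast
    have "(t' - t) *\<^sub>R (C - A) = (A + t' *\<^sub>R (C - A)) - (A + t *\<^sub>R (C - A))"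
      by (simp add: algebra_simps)
    also have "\<dots> = (B + r' *\<^sub>R (D - B)) - (B + r *\<^sub>R (D - B))" using M1 M2 N1 N2 by simp
    also have "\<dots> = (r' - r) *\<^sub>R (D - B)" by (simp add: algebra_simps)
    finally have "(t' - t) *\<^sub>R (C - A) = (r' - r) *\<^sub>R (D - B)" .
    then have "t' - t = 0" using ind by blast
    then have "t' = t" by simp
    then show "M' = M" using M1 N1 by simp
  qed
  show ?thesis using dp M1 M2 t0 t1 r0 r1 ind by blast
qed

lemma par_lemma:
  assumes "par v w" "v \<noteq> 0" "w \<noteq> 0"
  shows "\<exists>k. k \<noteq> 0 \<and> v = k *\<^sub>R w"
proof -
  from assms obtain c where c: "w = c *\<^sub>R v" unfolding par_def collinear_lemma by auto
  then have "c \<noteq> 0" using assms by auto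
  then show ?thesis using c by (intro exI[of _ "inverse c"]) auto
qed

lemma dual_coeffs:
  fixes A B C D A' B' C' D' :: "real^'n"
  assumes dq: "dual_quad A B C D A' B' C' D'"
    and dis: "distinct [A, B, C, D]" and dis': "distinct [A', B', C', D']"
    and M1: "M = A + t *\<^sub>R (C - A)" and M2: "M = B + r *\<^sub>R (D - B)"
    and t0: "t \<noteq> 0" and t1: "t \<noteq> 1" and r1: "r \<noteq> 1"
    and ind: "\<And>p q. p *\<^sub>R (C - A) = q *\<^sub>R (D - B) \<Longrightarrow> p = 0 \<and> q = 0"
  shows "\<exists>a b c d. B' - A' = a *\<^sub>R (B - A) \<and> C' - B' = b *\<^sub>R (C - B) \<and>
      D' - C' = c *\<^sub>R (D - C) \<and> A' - D' = d *\<^sub>R (A - D) \<and> a \<noteq> 0 \<and>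
      b = - a * t / (1 - t) \<and> c = a * t * r / ((1 - t) * (1 - r)) \<and> d = - a * r / (1 - r)"
proof -
  from dq have p1: "par (B' - A') (B - A)" and p2: "par (C' - B') (C - B)"
    and p3: "par (D' - C') (D - C)" and p4: "par (A' - D') (A - D)"
    and p5: "par (C' - A') (D - B)" and p6: "par (D' - B') (C - A)"
    unfolding dual_quad_def by auto
  obtain a where a: "a \<noteq> 0" "B' - A' = a *\<^sub>R (B - A)" using par_lemma[OF p1] dis dis' by auto
  obtain b where b: "C' - B' = b *\<^sub>R (C - B)" using par_lemma[OF p2] dis dis' by auto
  obtain c where c: "D' - C' = c *\<^sub>R (D - C)" using par_lemma[OF p3] dis dis' by auto
  obtain d where d: "A' - D' = d *\<^sub>R (A - D)" using par_lemma[OF p4] dis dis' by auto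
  obtain x where x: "C' - A' = x *\<^sub>R (D - B)" using par_lemma[OF p5] dis dis' by auto
  obtain y where y: "D' - B' = y *\<^sub>R (C - A)" using par_lemma[OF p6] dis dis' by auto
  define d1 where "d1 = C - A"
  define d2 where "d2 = D - B"
  have BA: "B - A = t *\<^sub>R d1 - r *\<^sub>R d2" using M1 M2 unfolding d1_def d2_def by (simp add: algebra_simps)
  have CB: "C - B = (1 - t) *\<^sub>R d1 + r *\<^sub>R d2" using M1 M2 unfolding d1_def d2_def by (simp add: algebra_simps)
  have DC: "D - C = (1 - r) *\<^sub>R d2 - (1 - t) *\<^sub>R d1" using M1 M2 unfolding d1_def d2_def by (simp add: algebra_simps)
  have AD: "A - D = - t *\<^sub>R d1 - (1 - r) *\<^sub>R d2" using M1 M2 unfolding d1_def d2_def by (simp add: algebra_simps)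
  have "C' - A' = (B' - A') + (C' - B')" by simp
  then have "x *\<^sub>R d2 = (a * t + b * (1 - t)) *\<^sub>R d1 + (b * r - a * r) *\<^sub>R d2"
    using a b x BA CB unfolding d2_def[symmetric] by (simp add: algebra_simps)
  then have "(a * t + b * (1 - t)) *\<^sub>R d1 = (x - (b * r - a * r)) *\<^sub>R d2"
    by (simp add: algebra_simps)
  then have e1: "a * t + b * (1 - t) = 0" using ind unfolding d1_def d2_def by blast
  have "D' - B' = (C' - B') + (D' - C')" by simp
  then have "y *\<^sub>R d1 = (b * (1 - t) - c * (1 - t)) *\<^sub>R d1 + (b * r + c * (1 - r)) *\<^sub>R d2"
    using b c y CB DC unfolding d1_def[symmetric] by (simp add: algebra_simps)
  then have "(y - (b * (1 - t) - c * (1 - t))) *\<^sub>R d1 = (b * r + c * (1 - r)) *\<^sub>R d2"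
    by (simp add: algebra_simps)
  then have e2: "b * r + c * (1 - r) = 0" using ind unfolding d1_def d2_def by blast
  have "(B' - A') + (C' - B') + (D' - C') + (A' - D') = 0" by simp
  then have "(a * t + b * (1 - t) - c * (1 - t) - d * t) *\<^sub>R d1 = (a * r - b * r - c * (1 - r) + d * (1 - r)) *\<^sub>R d2"
    using a b c d BA CB DC AD by (simp add: algebra_simps)
  then have e3: "a * t + b * (1 - t) - c * (1 - t) - d * t = 0" using ind unfolding d1_def d2_def by blast
  have t1': "1 - t \<noteq> 0" using t1 by simp
  have r1': "1 - r \<noteq> 0" using r1 by simp
  have bb: "b = - a * t / (1 - t)" using e1 t1' by (simp add: field_simps)
  have cc: "c = - b * r / (1 - r)" using e2 r1' by (simp add: field_simps)
  have dd: "d * t = - c * (1 - t)" using e1 e3 by (simp add: algebra_simps)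
  have cc2: "c = a * t * r / ((1 - t) * (1 - r))" using cc bb t1' r1' by simp
  have dd2: "d = - a * r / (1 - r)"
  proof -
    have "d = - c * (1 - t) / t" using dd t0 by (simp add: field_simps)
    moreover have "c * (1 - t) = a * t * r / (1 - r)" using cc2 t1' by simp
    ultimately have "d = - (a * t * r / (1 - r)) / t" by simp
    then show ?thesis using t0 by simp
  qed
  show ?thesis using a b c d bb cc2 dd2 by blast
qed



lemma pow_pt:
  fixes W P X R t :: real
  assumes "W - 2*t*P + t^2*X = R" "W + 2*(1-t)*P + (1-t)^2*X = R"
  shows "W + t*(1-t)*X = R"
proof -
  have "W + t*(1-t)*X - R = (1-t)*(W - 2*t*P + t^2*X - R) + t*(W + 2*(1-t)*P + (1-t)^2*X - R)"
    by (simp add: algebra_simps power2_eq_square)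
  then show ?thesis using assms by simp
qed

lemma fin_ident:
  fixes X Y Z t r :: real
  assumes "t*(1-t)*X = r*(1-r)*Y"
  shows "(t^2*X - 2*t*r*Z + r^2*Y)*((1-t)*(1-r)) = t*r*((1-t)^2*X - 2*(1-t)*(1-r)*Z + (1-r)^2*Y)"
proof -
  have "(t^2*X - 2*t*r*Z + r^2*Y)*((1-t)*(1-r)) - t*r*((1-t)^2*X - 2*(1-t)*(1-r)*Z + (1-r)^2*Y)
     = (t - r) * (t*(1-t)*X - r*(1-r)*Y)"
    by (simp add: algebra_simps power2_eq_square)
  then show ?thesis using assms by simp
qed

lemma norm_comb2:
  fixes d1 d2 :: "real^'n"
  shows "(norm (x *\<^sub>R d1 + y *\<^sub>R d2))^2 = x^2 * (d1 \<bullet> d1) + 2*x*y*(d1 \<bullet> d2) + y^2 * (d2 \<bullet> d2)"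
  unfolding power2_norm_eq_inner
  by (simp add: inner_add_left inner_add_right inner_commute algebra_simps power2_eq_square)

lemma circle_ident:
  fixes A B C D :: "real^'n"
  assumes cc: "concyclic A B C D"
    and M1: "M = A + t *\<^sub>R (C - A)" and M2: "M = B + r *\<^sub>R (D - B)"
  shows "(norm (B - A))^2 * ((1 - t) * (1 - r)) = t * r * (norm (D - C))^2"
proof -
  from cc obtain c0 R where hA: "dist c0 A = R" and hB: "dist c0 B = R" and hC: "dist c0 C = R"
    and hD: "dist c0 D = R" unfolding concyclic_def by blast
  define d1 where "d1 = C - A"
  define d2 where "d2 = D - B"
  define w where "w = M - c0"
  have eA: "A - c0 = 1 *\<^sub>R w + (- t) *\<^sub>R d1" unfolding w_def d1_def M1 by (simp add: algebra_simps)
  have eC: "C - c0 = 1 *\<^sub>R w + (1 - t) *\<^sub>R d1" unfolding w_def d1_def M1 by (simp add: algebra_simps)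
  have eB: "B - c0 = 1 *\<^sub>R w + (- r) *\<^sub>R d2" unfolding w_def d2_def M2 by (simp add: algebra_simps)
  have eD: "D - c0 = 1 *\<^sub>R w + (1 - r) *\<^sub>R d2" unfolding w_def d2_def M2 by (simp add: algebra_simps)
  have nA: "(norm (A - c0))^2 = R^2" using hA by (simp add: dist_norm norm_minus_commute)
  have nB: "(norm (B - c0))^2 = R^2" using hB by (simp add: dist_norm norm_minus_commute)
  have nC: "(norm (C - c0))^2 = R^2" using hC by (simp add: dist_norm norm_minus_commute)
  have nD: "(norm (D - c0))^2 = R^2" using hD by (simp add: dist_norm norm_minus_commute)
  have "w \<bullet> w - 2*t*(w \<bullet> d1) + t^2*(d1 \<bullet> d1) = R^2"
    using nA unfolding eA norm_comb2 by simp
  moreover have "w \<bullet> w + 2*(1-t)*(w \<bullet> d1) + (1-t)^2*(d1 \<bullet> d1) = R^2"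
    using nC unfolding eC norm_comb2 by simp
  ultimately have p1: "w \<bullet> w + t*(1-t)*(d1 \<bullet> d1) = R^2" by (rule pow_pt)
  have "w \<bullet> w - 2*r*(w \<bullet> d2) + r^2*(d2 \<bullet> d2) = R^2"
    using nB unfolding eB norm_comb2 by simp
  moreover have "w \<bullet> w + 2*(1-r)*(w \<bullet> d2) + (1-r)^2*(d2 \<bullet> d2) = R^2"
    using nD unfolding eD norm_comb2 by simp
  ultimately have p2: "w \<bullet> w + r*(1-r)*(d2 \<bullet> d2) = R^2" by (rule pow_pt)
  have key: "t*(1-t)*(d1 \<bullet> d1) = r*(1-r)*(d2 \<bullet> d2)" using p1 p2 by simp
  have BA: "B - A = t *\<^sub>R d1 + (- r) *\<^sub>R d2" using M1 M2 unfolding d1_def d2_def by (simp add: algebra_simps)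
  have DC: "D - C = (- (1 - t)) *\<^sub>R d1 + (1 - r) *\<^sub>R d2" using M1 M2 unfolding d1_def d2_def by (simp add: algebra_simps)
  have "(norm (B - A))^2 = t^2*(d1 \<bullet> d1) - 2*t*r*(d1 \<bullet> d2) + r^2*(d2 \<bullet> d2)"
    unfolding BA norm_comb2 by simp
  moreover have "(norm (D - C))^2 = (1-t)^2*(d1 \<bullet> d1) - 2*(1-t)*(1-r)*(d1 \<bullet> d2) + (1-r)^2*(d2 \<bullet> d2)"
    unfolding DC norm_comb2 by (simp add: power2_eq_square algebra_simps)
  ultimately show ?thesis using fin_ident[OF key] by simp
qed

lemma dlen_ratio:
  fixes A C M :: "real^'n"
  assumes M1: "M = A + t *\<^sub>R (C - A)" and AC: "A \<noteq> C" and t0: "t \<noteq> 0"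
  shows "dlen (C - A) M C / dlen (C - A) M A = (t - 1) / t"
proof -
  have n: "(C - A) \<bullet> (C - A) \<noteq> 0" using AC by simp
  have nn: "norm (C - A) \<noteq> 0" using AC by simp
  have "C - M = (1 - t) *\<^sub>R (C - A)" "A - M = (- t) *\<^sub>R (C - A)" unfolding M1 by (simp_all add: algebra_simps)
  then have "dlen (C - A) M C / dlen (C - A) M A = ((1 - t) * ((C - A) \<bullet> (C - A))) / ((- t) * ((C - A) \<bullet> (C - A)))"
    unfolding dlen_def using nn by simp
  also have "\<dots> = (t - 1) / t" using n t0 by (simp add: field_simps)
  finally show ?thesis .
qed



lemma exists_other:
  assumes "CARD('m::finite) \<ge> 2"
  shows "\<exists>j::'m. j \<noteq> i"
proof (rule ccontr)
  assume "\<not> ?thesis"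
  then have "(UNIV::'m set) = {i}" by auto
  then have "CARD('m) = 1" by (metis card.empty card_insert_disjoint empty_iff finite.emptyI One_nat_def)
  with assms show False by simp
qed

lemma ratio_unfold:
  "ratio_cond f s \<longleftrightarrow> (\<forall>u i j. i \<noteq> j \<longrightarrow>
     dlen (f (u + unitv i + unitv j) - f u) (diag_point (f u) (f (u + unitv i)) (f (u + unitv i + unitv j)) (f (u + unitv j))) (f (u + unitv i + unitv j))
     / dlen (f (u + unitv i + unitv j) - f u) (diag_point (f u) (f (u + unitv i)) (f (u + unitv i + unitv j)) (f (u + unitv j))) (f u)
       = s (u + unitv i + unitv j) / s u \<and>
     dlen (f (u + unitv j) - f (u + unitv i)) (diag_point (f u) (f (u + unitv i)) (f (u + unitv i + unitv j)) (f (u + unitv j))) (f (u + unitv j))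
     / dlen (f (u + unitv j) - f (u + unitv i)) (diag_point (f u) (f (u + unitv i)) (f (u + unitv i + unitv j)) (f (u + unitv j))) (f (u + unitv i))
       = s (u + unitv j) / s (u + unitv i))"
  unfolding ratio_cond_def Let_def by simp

lemma qnet_quad:
  fixes f :: "int^'m::finite \<Rightarrow> real^'n"
  assumes "Qnet f" "i \<noteq> j"
  shows "\<exists>t r. diag_point (f u) (f (u + unitv i)) (f (u + unitv i + unitv j)) (f (u + unitv j))
       = f u + t *\<^sub>R (f (u + unitv i + unitv j) - f u) \<and>
     diag_point (f u) (f (u + unitv i)) (f (u + unitv i + unitv j)) (f (u + unitv j))
       = f (u + unitv i) + r *\<^sub>R (f (u + unitv j) - f (u + unitv i))
     \<and> t \<noteq> 0 \<and> t \<noteq> 1 \<and> r \<noteq> 0 \<and> r \<noteq> 1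
     \<and> (\<forall>p q. p *\<^sub>R (f (u + unitv i + unitv j) - f u) = q *\<^sub>R (f (u + unitv j) - f (u + unitv i)) \<longrightarrow> p = 0 \<and> q = 0)"
  using assms quad_diag unfolding Qnet_def by blast

lemma qnet_distinct:
  fixes f :: "int^'m::finite \<Rightarrow> real^'n"
  assumes "Qnet f" "i \<noteq> j"
  shows "distinct [f u, f (u + unitv i), f (u + unitv i + unitv j), f (u + unitv j)]"
  using assms unfolding Qnet_def nondeg_planar_quad_def by blast

definition edgec :: "(int^'m::finite \<Rightarrow> real^'n) \<Rightarrow> (int^'m \<Rightarrow> real^'n) \<Rightarrow> int^'m \<Rightarrow> 'm \<Rightarrow> real" where
  "edgec f fs u i = (SOME a. fs (u + unitv i) - fs u = a *\<^sub>R (f (u + unitv i) - f u))"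

lemma some_scale:
  fixes v w :: "real^'n"
  assumes "v \<noteq> 0" "w = a *\<^sub>R v"
  shows "(SOME a. w = a *\<^sub>R v) = a"
proof -
  have "w = (SOME a. w = a *\<^sub>R v) *\<^sub>R v" using someI[of "\<lambda>a. w = a *\<^sub>R v" a] assms by blast
  with assms show ?thesis by (metis scaleR_cancel_right)
qed

lemma edgec_eq:
  assumes "f (u + unitv i) \<noteq> f u" "fs (u + unitv i) - fs u = a *\<^sub>R (f (u + unitv i) - f u)"
  shows "edgec f fs u i = a"
  unfolding edgec_def using assms by (intro some_scale) auto

lemma quad_edges:
  fixes f fs :: "int^'m::finite \<Rightarrow> real^'n"
  assumes Q: "Qnet f" and Qs: "Qnet fs"
    and du: "\<forall>u i j. i \<noteq> j \<longrightarrow>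
        dual_quad (f u) (f (u + unitv i)) (f (u + unitv i + unitv j)) (f (u + unitv j))
                  (fs u) (fs (u + unitv i)) (fs (u + unitv i + unitv j)) (fs (u + unitv j))"
    and ij: "i \<noteq> j"
  shows "\<exists>t r. diag_point (f u) (f (u + unitv i)) (f (u + unitv i + unitv j)) (f (u + unitv j))
       = f u + t *\<^sub>R (f (u + unitv i + unitv j) - f u) \<and>
     diag_point (f u) (f (u + unitv i)) (f (u + unitv i + unitv j)) (f (u + unitv j))
       = f (u + unitv i) + r *\<^sub>R (f (u + unitv j) - f (u + unitv i))
     \<and> t \<noteq> 0 \<and> t \<noteq> 1 \<and> r \<noteq> 0 \<and> r \<noteq> 1 \<and> edgec f fs u i \<noteq> 0
     \<and> edgec f fs (u + unitv i) j = - edgec f fs u i * t / (1 - t)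
     \<and> edgec f fs (u + unitv j) i = edgec f fs u i * t * r / ((1 - t) * (1 - r))
     \<and> edgec f fs u j = - edgec f fs u i * r / (1 - r)"
proof -
  obtain t r where tr: "diag_point (f u) (f (u + unitv i)) (f (u + unitv i + unitv j)) (f (u + unitv j))
       = f u + t *\<^sub>R (f (u + unitv i + unitv j) - f u)"
     "diag_point (f u) (f (u + unitv i)) (f (u + unitv i + unitv j)) (f (u + unitv j))
       = f (u + unitv i) + r *\<^sub>R (f (u + unitv j) - f (u + unitv i))"
     "t \<noteq> 0" "t \<noteq> 1" "r \<noteq> 0" "r \<noteq> 1"
     "\<And>p q. p *\<^sub>R (f (u + unitv i + unitv j) - f u) = q *\<^sub>R (f (u + unitv j) - f (u + unitv i)) \<Longrightarrow> p = 0 \<and> q = 0"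
    using qnet_quad[OF Q ij, of u] by blast
  have dis: "distinct [f u, f (u + unitv i), f (u + unitv i + unitv j), f (u + unitv j)]"
    using qnet_distinct[OF Q ij] .
  have dis': "distinct [fs u, fs (u + unitv i), fs (u + unitv i + unitv j), fs (u + unitv j)]"
    using qnet_distinct[OF Qs ij] .
  obtain a b c d where abcd:
    "fs (u + unitv i) - fs u = a *\<^sub>R (f (u + unitv i) - f u)"
    "fs (u + unitv i + unitv j) - fs (u + unitv i) = b *\<^sub>R (f (u + unitv i + unitv j) - f (u + unitv i))"
    "fs (u + unitv j) - fs (u + unitv i + unitv j) = c *\<^sub>R (f (u + unitv j) - f (u + unitv i + unitv j))"
    "fs u - fs (u + unitv j) = d *\<^sub>R (f u - f (u + unitv j))"
    "a \<noteq> 0" "b = - a * t / (1 - t)" "c = a * t * r / ((1 - t) * (1 - r))" "d = - a * r / (1 - r)"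
    using dual_coeffs[OF du[rule_format, OF ij] dis dis' tr(1) tr(2) tr(3) tr(4) tr(6) tr(7)] by blast
  have ea: "edgec f fs u i = a" using abcd(1) dis by (intro edgec_eq) auto
  have eb: "edgec f fs (u + unitv i) j = b" using abcd(2) dis by (intro edgec_eq) auto
  have ujc: "u + unitv j + unitv i = u + unitv i + unitv j" by (simp add: add_ac)
  have c': "fs (u + unitv j + unitv i) - fs (u + unitv j) = c *\<^sub>R (f (u + unitv j + unitv i) - f (u + unitv j))"
    unfolding ujc using abcd(3) by (metis minus_diff_eq scaleR_minus_right)
  have ec: "edgec f fs (u + unitv j) i = c" using c' dis unfolding ujc by (intro edgec_eq) (auto simp: ujc)
  have d': "fs (u + unitv j) - fs u = d *\<^sub>R (f (u + unitv j) - f u)"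
    using abcd(4) by (metis minus_diff_eq scaleR_minus_right)
  have ed: "edgec f fs u j = d" using d' dis by (intro edgec_eq) auto
  show ?thesis using tr abcd ea eb ec ed by blast
qed



lemma ratio_alg:
  fixes nA nB nC a b :: real
  assumes "nA * nB = inverse a" "nB * nC = inverse b" "nB \<noteq> 0" "a \<noteq> 0" "b \<noteq> 0"
  shows "nC / nA = a / b"
proof -
  have "nC = inverse b / nB" "nA = inverse a / nB" using assms by (simp_all add: field_simps)
  then have "nC / nA = (inverse b / nB) / (inverse a / nB)" by simp
  also have "\<dots> = inverse b / inverse a" using assms by simp
  also have "\<dots> = a / b" by (simp add: divide_inverse mult.commute)
  finally show ?thesis .
qed

lemma koenigs_s:
  fixes f :: "int^'m::finite \<Rightarrow> real^'n"
  assumes m2: "CARD('m) \<ge> 2" and k: "koenigs f"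
  shows "\<exists>s. (\<forall>u. s u \<noteq> 0) \<and> ratio_cond f s"
proof -
  from k have Q: "Qnet f" unfolding koenigs_def by blast
  from k obtain fs :: "int^'m \<Rightarrow> real^'n" where Qs: "Qnet fs" and du: "\<forall>u i j. i \<noteq> j \<longrightarrow>
        dual_quad (f u) (f (u + unitv i)) (f (u + unitv i + unitv j)) (f (u + unitv j))
                  (fs u) (fs (u + unitv i)) (fs (u + unitv i + unitv j)) (fs (u + unitv j))"
    unfolding koenigs_def by blast
  define g where "g = edgec f fs"
  note qe = quad_edges[OF Q Qs du, folded g_def]
  have gnz: "g u i \<noteq> 0" for u i
  proof -
    obtain j where "j \<noteq> i" using exists_other[OF m2] by blast
    then show ?thesis using qe[of i j u] by blast
  qed
  have gcl: "g u i * g (u + unitv j) i = g (u + unitv i) j * g u j" for u i j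
  proof (cases "i = j")
    case True then show ?thesis by simp
  next
    case False
    then obtain t r where tr: "t \<noteq> 1" "r \<noteq> 1" "g (u + unitv i) j = - g u i * t / (1 - t)"
      "g (u + unitv j) i = g u i * t * r / ((1 - t) * (1 - r))" "g u j = - g u i * r / (1 - r)"
      using qe[of i j u] by blast
    have "1 - t \<noteq> 0" "1 - r \<noteq> 0" using tr by auto
    then show ?thesis unfolding tr(3,4,5) by (simp add: field_simps)
  qed
  define G where "G x i = (if black x then g x i else inverse (g x i))" for x i
  have Gnz: "G x i \<noteq> 0" for x i using gnz unfolding G_def by simp
  have Gcl: "G x i * G (x + unitv i) j = G x j * G (x + unitv j) i" for x i j
    unfolding G_def using gcl[of x i j] gnz
    by (simp add: black_add_unitv field_simps mult.commute)
  obtain h where hnz: "\<And>x. h x \<noteq> 0" and hst: "\<And>x i. h (x + unitv i) = G x i * h x"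
    using integrate[OF Gnz Gcl] by blast
  define \<nu> where "\<nu> x = (if black x then h x else inverse (h x))" for x
  have nunz: "\<nu> x \<noteq> 0" for x unfolding \<nu>_def using hnz by simp
  have nue: "\<nu> x * \<nu> (x + unitv i) = inverse (g x i)" for x i
    unfolding \<nu>_def hst G_def using hnz gnz by (simp add: black_add_unitv field_simps)
  have rc: "ratio_cond f \<nu>"
    unfolding ratio_unfold
  proof (intro allI impI)
    fix u i j assume ij: "(i::'m) \<noteq> j"
    obtain t r where tr: "diag_point (f u) (f (u + unitv i)) (f (u + unitv i + unitv j)) (f (u + unitv j))
       = f u + t *\<^sub>R (f (u + unitv i + unitv j) - f u)"
     "diag_point (f u) (f (u + unitv i)) (f (u + unitv i + unitv j)) (f (u + unitv j))
       = f (u + unitv i) + r *\<^sub>R (f (u + unitv j) - f (u + unitv i))"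
     "t \<noteq> 0" "t \<noteq> 1" "r \<noteq> 0" "r \<noteq> 1" "g u i \<noteq> 0"
     "g (u + unitv i) j = - g u i * t / (1 - t)"
     "g (u + unitv j) i = g u i * t * r / ((1 - t) * (1 - r))"
      using qe[OF ij, of u] by blast
    have dis: "distinct [f u, f (u + unitv i), f (u + unitv i + unitv j), f (u + unitv j)]"
      using qnet_distinct[OF Q ij] .
    have ujc: "u + unitv j + unitv i = u + unitv i + unitv j" by (simp add: add_ac)
    have e1: "\<nu> u * \<nu> (u + unitv i) = inverse (g u i)" by (rule nue)
    have e2: "\<nu> (u + unitv i) * \<nu> (u + unitv i + unitv j) = inverse (g (u + unitv i) j)" by (rule nue)
    have e3: "\<nu> (u + unitv j) * \<nu> (u + unitv i + unitv j) = inverse (g (u + unitv j) i)"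
      using nue[of "u + unitv j" i] unfolding ujc .
    have bnz: "g (u + unitv i) j \<noteq> 0" "g (u + unitv j) i \<noteq> 0" using gnz by auto
    have r1: "\<nu> (u + unitv i + unitv j) / \<nu> u = g u i / g (u + unitv i) j"
      by (rule ratio_alg[OF e1 e2 nunz tr(7) bnz(1)])
    have e3': "\<nu> (u + unitv i + unitv j) * \<nu> (u + unitv j) = inverse (g (u + unitv j) i)"
      using e3 by (simp add: mult.commute)
    have r2: "\<nu> (u + unitv j) / \<nu> (u + unitv i) = g (u + unitv i) j / g (u + unitv j) i"
      by (rule ratio_alg[OF e2 e3' nunz bnz])
    have t1': "1 - t \<noteq> 0" "1 - r \<noteq> 0" using tr by auto
    have "g u i / g (u + unitv i) j = (t - 1) / t"
      unfolding tr(8) using tr(3,7) t1' by (simp add: field_simps)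
    moreover have "g (u + unitv i) j / g (u + unitv j) i = (r - 1) / r"
      unfolding tr(8,9) using tr(3,5,7) t1' by (simp add: field_simps)
    moreover have "dlen (f (u + unitv i + unitv j) - f u) (diag_point (f u) (f (u + unitv i)) (f (u + unitv i + unitv j)) (f (u + unitv j))) (f (u + unitv i + unitv j))
     / dlen (f (u + unitv i + unitv j) - f u) (diag_point (f u) (f (u + unitv i)) (f (u + unitv i + unitv j)) (f (u + unitv j))) (f u) = (t - 1) / t"
      by (rule dlen_ratio[OF tr(1)]) (use dis tr(3) in auto)
    moreover have "dlen (f (u + unitv j) - f (u + unitv i)) (diag_point (f u) (f (u + unitv i)) (f (u + unitv i + unitv j)) (f (u + unitv j))) (f (u + unitv j))
     / dlen (f (u + unitv j) - f (u + unitv i)) (diag_point (f u) (f (u + unitv i)) (f (u + unitv i + unitv j)) (f (u + unitv j))) (f (u + unitv i)) = (r - 1) / r"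
      by (rule dlen_ratio[OF tr(2)]) (use dis tr(5) in auto)
    ultimately show "dlen (f (u + unitv i + unitv j) - f u) (diag_point (f u) (f (u + unitv i)) (f (u + unitv i + unitv j)) (f (u + unitv j))) (f (u + unitv i + unitv j))
     / dlen (f (u + unitv i + unitv j) - f u) (diag_point (f u) (f (u + unitv i)) (f (u + unitv i + unitv j)) (f (u + unitv j))) (f u)
       = \<nu> (u + unitv i + unitv j) / \<nu> u \<and>
     dlen (f (u + unitv j) - f (u + unitv i)) (diag_point (f u) (f (u + unitv i)) (f (u + unitv i + unitv j)) (f (u + unitv j))) (f (u + unitv j))
     / dlen (f (u + unitv j) - f (u + unitv i)) (diag_point (f u) (f (u + unitv i)) (f (u + unitv i + unitv j)) (f (u + unitv j))) (f (u + unitv i))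
       = \<nu> (u + unitv j) / \<nu> (u + unitv i)"
      using r1 r2 by simp
  qed
  show ?thesis using nunz rc by blast
qed



definition Nn :: "int^'m::finite \<Rightarrow> nat" where
  "Nn x = (\<Sum>k\<in>UNIV. nat \<bar>x $ k\<bar>)"

definition Sdir :: "(int^'m::finite) set" where
  "Sdir = {d. \<exists>i. d = unitv i \<or> d = - unitv i}"

lemma step_exists:
  fixes x :: "int^'m::finite"
  assumes "x \<noteq> 0"
  shows "\<exists>d\<in>Sdir. Nn (x + d) + 1 = Nn x"
proof -
  obtain i where xi: "x $ i \<noteq> 0" using assms by (metis vec_eq_iff zero_index)
  define d where "d = (if x $ i > 0 then - unitv i else unitv i)"
  have dS: "d \<in> Sdir" unfolding Sdir_def d_def by auto
  have dk: "d $ k = (if k = i then (if x $ i > 0 then -1 else 1) else 0)" for k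
  proof (cases "x $ i > 0")
    case True
    then have "d = - unitv i" unfolding d_def by (rule if_P)
    then have "d $ k = - (unitv i $ k)" by simp
    then show ?thesis using True unfolding unitv_nth by (cases "k = i") auto
  next
    case False
    then have "d = unitv i" unfolding d_def by (rule if_not_P)
    then have "d $ k = unitv i $ k" by simp
    then show ?thesis using False unfolding unitv_nth by (cases "k = i") auto
  qed
  have pt: "nat \<bar>(x + d) $ k\<bar> + (if k = i then 1 else 0) = nat \<bar>x $ k\<bar>" for k
  proof -
    have e: "(x + d) $ k = x $ k + d $ k" by simp
    show ?thesis unfolding e dk using xi by auto
  qed
  have "Nn (x + d) + (\<Sum>k\<in>UNIV. (if k = i then 1 else 0::nat)) = Nn x"
    unfolding Nn_def sum.distrib[symmetric] pt ..
  then have "Nn (x + d) + 1 = Nn x" by simp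
  then show ?thesis using dS by blast
qed

lemma black_add_S:
  assumes "d \<in> Sdir"
  shows "black (z + d) \<longleftrightarrow> \<not> black z"
proof -
  from assms obtain i where "d = unitv i \<or> d = - unitv i" unfolding Sdir_def by blast
  then show ?thesis
  proof
    assume "d = unitv i" then show ?thesis by (simp add: black_add_unitv)
  next
    assume d: "d = - unitv i"
    have "black z \<longleftrightarrow> \<not> black (z - unitv i)"
      using black_add_unitv[of "z - unitv i" i] by simp
    then show ?thesis using d by simp
  qed
qed

lemma black_zero: "black (0::int^'m::finite)"
  unfolding black_def by simp

lemma Sdir_neg: "d \<in> Sdir \<Longrightarrow> - d \<in> Sdir"
  unfolding Sdir_def by auto

lemma div_cross:
  fixes x y x' y' :: real
  assumes "x / y = x' / y'" "y \<noteq> 0" "y' \<noteq> 0" "x \<noteq> 0" "x' \<noteq> 0"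
  shows "x' / x = y' / y"
proof -
  have "x * y' = x' * y" using assms by (simp add: field_simps)
  then show ?thesis using assms by (simp add: field_simps)
qed

definition rq1 :: "(int^'m::finite \<Rightarrow> real^'n) \<Rightarrow> int^'m \<Rightarrow> 'm \<Rightarrow> 'm \<Rightarrow> real" where
  "rq1 f u i j = (let A = f u; B = f (u + unitv i); C = f (u + unitv i + unitv j); D = f (u + unitv j);
          M = diag_point A B C D in dlen (C - A) M C / dlen (C - A) M A)"
definition rq2 :: "(int^'m::finite \<Rightarrow> real^'n) \<Rightarrow> int^'m \<Rightarrow> 'm \<Rightarrow> 'm \<Rightarrow> real" where
  "rq2 f u i j = (let A = f u; B = f (u + unitv i); C = f (u + unitv i + unitv j); D = f (u + unitv j);
          M = diag_point A B C D in dlen (D - B) M D / dlen (D - B) M B)"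

lemma ratio_rq: "ratio_cond f s \<longleftrightarrow> (\<forall>u i j. i \<noteq> j \<longrightarrow> rq1 f u i j = s (u + unitv i + unitv j) / s u
   \<and> rq2 f u i j = s (u + unitv j) / s (u + unitv i))"
  unfolding ratio_cond_def rq1_def rq2_def Let_def ..

lemma uniq:
  fixes f :: "int^'m::finite \<Rightarrow> real^'n"
  assumes m2: "CARD('m) \<ge> 2"
    and snz: "\<forall>u. s u \<noteq> 0" and rs: "ratio_cond f s"
    and s'nz: "\<forall>u. s' u \<noteq> 0" and rs': "ratio_cond f s'"
  shows "\<exists>lam mu. lam \<noteq> 0 \<and> mu \<noteq> 0 \<and> (\<forall>u. s' u = (if black u then lam else mu) * s u)"
proof -
  define \<phi> where "\<phi> u = s' u / s u" for u
  have F2: "\<phi> (u + unitv i + unitv j) = \<phi> u" if "i \<noteq> j" for u i j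
  proof -
    have h1: "rq1 f u i j = s (u + unitv i + unitv j) / s u"
      using ratio_rq[THEN iffD1, OF rs, rule_format, OF that] by blast
    have h2: "rq1 f u i j = s' (u + unitv i + unitv j) / s' u"
      using ratio_rq[THEN iffD1, OF rs', rule_format, OF that] by blast
    have "s (u + unitv i + unitv j) / s u = s' (u + unitv i + unitv j) / s' u" using h1 h2 by simp
    then show ?thesis unfolding \<phi>_def by (rule div_cross) (use snz s'nz in auto)
  qed
  have F1: "\<phi> (u + unitv j) = \<phi> (u + unitv i)" if "i \<noteq> j" for u i j
  proof -
    have h1: "rq2 f u i j = s (u + unitv j) / s (u + unitv i)"
      using ratio_rq[THEN iffD1, OF rs, rule_format, OF that] by blast
    have h2: "rq2 f u i j = s' (u + unitv j) / s' (u + unitv i)"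
      using ratio_rq[THEN iffD1, OF rs', rule_format, OF that] by blast
    have "s (u + unitv j) / s (u + unitv i) = s' (u + unitv j) / s' (u + unitv i)" using h1 h2 by simp
    then show ?thesis unfolding \<phi>_def by (rule div_cross) (use snz s'nz in auto)
  qed
  have F1a: "\<phi> (u + unitv a) = \<phi> (u + unitv b)" for u a b
  proof (cases "a = b")
    case True then show ?thesis by simp
  next
    case False then show ?thesis using F1[of b a u] by simp
  qed
  have Fa: "\<phi> (u + unitv a + unitv b) = \<phi> u" for u a b
  proof (cases "a = b")
    case True
    obtain j where j: "j \<noteq> a" using exists_other[OF m2] by blast
    have "\<phi> (u + unitv a + unitv b) = \<phi> (u + unitv a + unitv j)" using F1a[of "u + unitv a" b j] by simp
    also have "\<dots> = \<phi> u" using F2[of a j u] j by simp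
    finally show ?thesis .
  next
    case False then show ?thesis using F2[of a b u] by simp
  qed
  have inv: "\<phi> (z + d1 + d2) = \<phi> z" if "d1 \<in> Sdir" "d2 \<in> Sdir" for z d1 d2
  proof -
    from that obtain a b where a: "d1 = unitv a \<or> d1 = - unitv a" and b: "d2 = unitv b \<or> d2 = - unitv b"
      unfolding Sdir_def by blast
    show ?thesis
    proof (cases "d1 = unitv a")
      case d1: True
      show ?thesis
      proof (cases "d2 = unitv b")
        case True then show ?thesis using d1 Fa by simp
      next
        case False
        then have d2: "d2 = - unitv b" using b by blast
        have eq: "z + d1 + d2 = (z - unitv b) + unitv a" using d1 d2 by (simp add: algebra_simps)
        have "\<phi> ((z - unitv b) + unitv a) = \<phi> ((z - unitv b) + unitv b)" by (rule F1a)
        then show ?thesis unfolding eq by simp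
      qed
    next
      case False
      then have d1: "d1 = - unitv a" using a by blast
      show ?thesis
      proof (cases "d2 = unitv b")
        case d2: True
        have eq: "z + d1 + d2 = (z - unitv a) + unitv b" using d1 d2 by (simp add: algebra_simps)
        have "\<phi> ((z - unitv a) + unitv b) = \<phi> ((z - unitv a) + unitv a)" by (rule F1a)
        then show ?thesis unfolding eq by simp
      next
        case False
        then have d2: "d2 = - unitv b" using b by blast
        have eq: "z + d1 + d2 + unitv a + unitv b = z" using d1 d2 by (simp add: algebra_simps)
        have "\<phi> (z + d1 + d2 + unitv a + unitv b) = \<phi> (z + d1 + d2)" by (rule Fa)
        then show ?thesis unfolding eq by simp
      qed
    qed
  qed
  define k0 :: 'm where "k0 = undefined"
  define c where "c x = (if black x then \<phi> 0 else \<phi> (unitv k0))" for x :: "int^'m"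
  have phiS: "\<phi> d = \<phi> (unitv k0)" if "d \<in> Sdir" for d
  proof -
    have "- unitv k0 \<in> Sdir" unfolding Sdir_def by auto
    then have "\<phi> (unitv k0 + - unitv k0 + d) = \<phi> (unitv k0)" using inv that by blast
    then show ?thesis by simp
  qed
  have main: "\<forall>x. Nn x = n \<longrightarrow> \<phi> x = c x" for n
  proof (induction n rule: less_induct)
    case (less n)
    show ?case
    proof (intro allI impI)
      fix x :: "int^'m" assume Nx: "Nn x = n"
      show "\<phi> x = c x"
      proof (cases "x = 0")
        case True
        have b0: "black (0::int^'m)" by (rule black_zero)
        show ?thesis unfolding c_def True using b0 by simp
      next
        case False
        then obtain d where dS: "d \<in> Sdir" and Nd: "Nn (x + d) + 1 = Nn x" using step_exists by blast
        show ?thesis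
        proof (cases "x + d = 0")
          case True
          then have xd: "x = - d" by (metis add_diff_cancel_right' diff_0 )
          have "black ((0::int^'m) + - d) \<longleftrightarrow> \<not> black (0::int^'m)" by (rule black_add_S[OF Sdir_neg[OF dS]])
          then have "\<not> black x" using xd black_zero by simp
          then show ?thesis unfolding c_def using phiS[OF Sdir_neg[OF dS]] xd by simp
        next
          case False
          then obtain d2 where d2S: "d2 \<in> Sdir" and Nd2: "Nn (x + d + d2) + 1 = Nn (x + d)"
            using step_exists by blast
          have lt: "Nn (x + d + d2) < n" using Nd Nd2 Nx by simp
          have IH: "\<phi> (x + d + d2) = c (x + d + d2)" using less.IH[OF lt] by blast
          have xe: "(x + d + d2) + (- d2) + (- d) = x" by (simp add: algebra_simps)
          have "\<phi> ((x + d + d2) + (- d2) + (- d)) = \<phi> (x + d + d2)" by (rule inv[OF Sdir_neg[OF d2S] Sdir_neg[OF dS]])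
          then have "\<phi> x = \<phi> (x + d + d2)" unfolding xe .
          moreover have "black (x + d + d2) \<longleftrightarrow> black x"
            using black_add_S[OF dS, of x] black_add_S[OF d2S, of "x + d"] by simp
          ultimately show ?thesis using IH unfolding c_def by simp
        qed
      qed
    qed
  qed
  have "\<forall>u. s' u = (if black u then \<phi> 0 else \<phi> (unitv k0)) * s u"
  proof
    fix u
    have "\<phi> u = c u" using main by blast
    then show "s' u = (if black u then \<phi> 0 else \<phi> (unitv k0)) * s u"
      unfolding c_def \<phi>_def using snz by (simp add: field_simps split: if_splits)
  qed
  moreover have "\<phi> 0 \<noteq> 0" "\<phi> (unitv k0) \<noteq> 0" unfolding \<phi>_def using snz s'nz by auto
  ultimately show ?thesis by blast
qed



lemma alpha_alg:
  fixes sA sB sC sD t r P Q :: real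
  assumes "sC = sA * ((t - 1) / t)" "sD = sB * ((r - 1) / r)" "t \<noteq> 0" "t \<noteq> 1" "r \<noteq> 0" "r \<noteq> 1"
    "sA \<noteq> 0" "sB \<noteq> 0" "P * ((1 - t) * (1 - r)) = t * r * Q"
  shows "Q / (sD * sC) = P / (sA * sB)"
proof -
  have t1: "t - 1 \<noteq> 0" "r - 1 \<noteq> 0" using assms by auto
  define K where "K = ((t - 1) / t) * ((r - 1) / r)"
  have Knz: "K \<noteq> 0" unfolding K_def using t1 assms by simp
  have K: "sD * sC = (sA * sB) * K" unfolding K_def assms(1,2) by (simp add: mult_ac)
  have "Q * (t * r) = P * ((t - 1) * (r - 1))" using assms(9) by (simp add: algebra_simps)
  then have QK: "Q = P * K" unfolding K_def using assms by (simp add: field_simps)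
  show ?thesis unfolding K QK using Knz assms by simp
qed

lemma rq1_eq: "rq1 f u i j = dlen (f (u + unitv i + unitv j) - f u) (diag_point (f u) (f (u + unitv i)) (f (u + unitv i + unitv j)) (f (u + unitv j))) (f (u + unitv i + unitv j))
     / dlen (f (u + unitv i + unitv j) - f u) (diag_point (f u) (f (u + unitv i)) (f (u + unitv i + unitv j)) (f (u + unitv j))) (f u)"
  unfolding rq1_def Let_def ..

lemma rq2_eq: "rq2 f u i j = dlen (f (u + unitv j) - f (u + unitv i)) (diag_point (f u) (f (u + unitv i)) (f (u + unitv i + unitv j)) (f (u + unitv j))) (f (u + unitv j))
     / dlen (f (u + unitv j) - f (u + unitv i)) (diag_point (f u) (f (u + unitv i)) (f (u + unitv i + unitv j)) (f (u + unitv j))) (f (u + unitv i))"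
  unfolding rq2_def Let_def ..

lemma edge_label:
  fixes f :: "int^'m::finite \<Rightarrow> real^'n"
  assumes circ: "circular f" and snz: "\<forall>u. s u \<noteq> 0" and rs: "ratio_cond f s" and ij: "i \<noteq> j"
  shows "(norm (f (u + unitv j + unitv i) - f (u + unitv j)))\<^sup>2 / (s (u + unitv j) * s (u + unitv j + unitv i))
       = (norm (f (u + unitv i) - f u))\<^sup>2 / (s u * s (u + unitv i))"
proof -
  have Q: "Qnet f" using circ unfolding circular_def by blast
  have cc: "concyclic (f u) (f (u + unitv i)) (f (u + unitv i + unitv j)) (f (u + unitv j))"
    using circ ij unfolding circular_def by blast
  obtain t r where tr: "diag_point (f u) (f (u + unitv i)) (f (u + unitv i + unitv j)) (f (u + unitv j))
       = f u + t *\<^sub>R (f (u + unitv i + unitv j) - f u)"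
     "diag_point (f u) (f (u + unitv i)) (f (u + unitv i + unitv j)) (f (u + unitv j))
       = f (u + unitv i) + r *\<^sub>R (f (u + unitv j) - f (u + unitv i))"
     "t \<noteq> 0" "t \<noteq> 1" "r \<noteq> 0" "r \<noteq> 1"
    using qnet_quad[OF Q ij, of u] by blast
  have dis: "distinct [f u, f (u + unitv i), f (u + unitv i + unitv j), f (u + unitv j)]"
    using qnet_distinct[OF Q ij] .
  have h1: "rq1 f u i j = s (u + unitv i + unitv j) / s u"
    using ratio_rq[THEN iffD1, OF rs, rule_format, OF ij] by blast
  have h2: "rq2 f u i j = s (u + unitv j) / s (u + unitv i)"
    using ratio_rq[THEN iffD1, OF rs, rule_format, OF ij] by blast
  have d1: "rq1 f u i j = (t - 1) / t"
    unfolding rq1_eq by (rule dlen_ratio[OF tr(1)]) (use dis tr(3) in auto)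
  have d2: "rq2 f u i j = (r - 1) / r"
    unfolding rq2_eq by (rule dlen_ratio[OF tr(2)]) (use dis tr(5) in auto)
  have sC: "s (u + unitv i + unitv j) = s u * ((t - 1) / t)" using h1 d1 snz
    by (metis nonzero_mult_div_cancel_left times_divide_eq_right)
  have sD: "s (u + unitv j) = s (u + unitv i) * ((r - 1) / r)" using h2 d2 snz
    by (metis nonzero_mult_div_cancel_left times_divide_eq_right)
  have ci: "(norm (f (u + unitv i) - f u))^2 * ((1 - t) * (1 - r)) = t * r * (norm (f (u + unitv j) - f (u + unitv i + unitv j)))^2"
    by (rule circle_ident[OF cc tr(1) tr(2)])
  have ujc: "u + unitv j + unitv i = u + unitv i + unitv j" by (simp add: add_ac)
  have nrm: "norm (f (u + unitv i + unitv j) - f (u + unitv j)) = norm (f (u + unitv j) - f (u + unitv i + unitv j))"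
    by (rule norm_minus_commute)
  show ?thesis unfolding ujc nrm
    by (rule alpha_alg[OF sC sD tr(3-6)]) (use snz ci in auto)
qed

lemma scaled_ratio:
  assumes rs: "ratio_cond f s" and nz: "lam \<noteq> 0" "mu \<noteq> 0"
  shows "ratio_cond f (\<lambda>u. (if black u then lam else mu) * s u)"
proof -
  have b1: "black (u + unitv i + unitv j) \<longleftrightarrow> black u" for u i j by (simp add: black_add_unitv)
  have b2: "black (u + unitv j) \<longleftrightarrow> black (u + unitv i)" for u i j by (simp add: black_add_unitv)
  show ?thesis unfolding ratio_rq
  proof (intro allI impI)
    fix u i j assume ij: "(i::'a) \<noteq> j"
    have h: "rq1 f u i j = s (u + unitv i + unitv j) / s u \<and> rq2 f u i j = s (u + unitv j) / s (u + unitv i)"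
      using ratio_rq[THEN iffD1, OF rs, rule_format, OF ij] by blast
    show "rq1 f u i j = (if black (u + unitv i + unitv j) then lam else mu) * s (u + unitv i + unitv j) /
           ((if black u then lam else mu) * s u) \<and>
          rq2 f u i j = (if black (u + unitv j) then lam else mu) * s (u + unitv j) /
           ((if black (u + unitv i) then lam else mu) * s (u + unitv i))"
      unfolding b1 using h nz b2[of u j i] by simp
  qed
qed

theorem mainTheorem15:
  fixes f :: "int^'m::finite \<Rightarrow> real^'n"
  assumes m2: "CARD('m) \<ge> 2"
    and iso: "isothermic f"
  shows "(\<exists>s. (\<forall>u. s u \<noteq> 0) \<and> ratio_cond f s \<and>
            (\<forall>s'. ((\<forall>u. s' u \<noteq> 0) \<and> ratio_cond f s') \<longleftrightarrow>
               (\<exists>lam mu. lam \<noteq> 0 \<and> mu \<noteq> 0 \<and>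
                   (\<forall>u. s' u = (if black u then lam else mu) * s u))))
       \<and> (\<forall>s. (\<forall>u. s u \<noteq> 0) \<and> ratio_cond f s \<longrightarrow>
            (let \<alpha> = (\<lambda>i u. (norm (f (u + unitv i) - f u))\<^sup>2 / (s u * s (u + unitv i)))
             in (\<forall>i j u. i \<noteq> j \<longrightarrow> \<alpha> i (u + unitv j) = \<alpha> i u)
              \<and> (\<forall>i u. (norm (f (u + unitv i) - f u))\<^sup>2 = \<alpha> i u * s u * s (u + unitv i))
              \<and> (\<forall>lam mu. lam \<noteq> 0 \<and> mu \<noteq> 0 \<longrightarrow>
                   (let s' = (\<lambda>u. (if black u then lam else mu) * s u)
                    in \<forall>i u. (norm (f (u + unitv i) - f u))\<^sup>2 / (s' u * s' (u + unitv i))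
                             = inverse (lam * mu) * \<alpha> i u))))"
proof -
  have circ: "circular f" and kg: "koenigs f" using iso unfolding isothermic_def by auto
  obtain \<nu> where nunz: "\<forall>u. \<nu> u \<noteq> 0" and nrc: "ratio_cond f \<nu>"
    using koenigs_s[OF m2 kg] by blast
  have P1: "\<forall>s'. ((\<forall>u. s' u \<noteq> 0) \<and> ratio_cond f s') \<longleftrightarrow>
               (\<exists>lam mu. lam \<noteq> 0 \<and> mu \<noteq> 0 \<and>
                   (\<forall>u. s' u = (if black u then lam else mu) * \<nu> u))"
  proof (intro allI iffI)
    fix s' :: "int^'m \<Rightarrow> real"
    assume "(\<forall>u. s' u \<noteq> 0) \<and> ratio_cond f s'"
    then show "\<exists>lam mu. lam \<noteq> 0 \<and> mu \<noteq> 0 \<and> (\<forall>u. s' u = (if black u then lam else mu) * \<nu> u)"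
      using uniq[OF m2 nunz nrc] by blast
  next
    fix s' :: "int^'m \<Rightarrow> real"
    assume "\<exists>lam mu. lam \<noteq> 0 \<and> mu \<noteq> 0 \<and> (\<forall>u. s' u = (if black u then lam else mu) * \<nu> u)"
    then obtain lam mu where lm: "lam \<noteq> 0" "mu \<noteq> 0" and s': "\<forall>u. s' u = (if black u then lam else mu) * \<nu> u"
      by blast
    have "s' = (\<lambda>u. (if black u then lam else mu) * \<nu> u)" using s' by auto
    then show "(\<forall>u. s' u \<noteq> 0) \<and> ratio_cond f s'"
      using scaled_ratio[OF nrc lm] nunz lm by simp
  qed
  have P2: "\<forall>s. (\<forall>u. s u \<noteq> 0) \<and> ratio_cond f s \<longrightarrow>
            (let \<alpha> = (\<lambda>i u. (norm (f (u + unitv i) - f u))\<^sup>2 / (s u * s (u + unitv i)))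
             in (\<forall>i j u. i \<noteq> j \<longrightarrow> \<alpha> i (u + unitv j) = \<alpha> i u)
              \<and> (\<forall>i u. (norm (f (u + unitv i) - f u))\<^sup>2 = \<alpha> i u * s u * s (u + unitv i))
              \<and> (\<forall>lam mu. lam \<noteq> 0 \<and> mu \<noteq> 0 \<longrightarrow>
                   (let s' = (\<lambda>u. (if black u then lam else mu) * s u)
                    in \<forall>i u. (norm (f (u + unitv i) - f u))\<^sup>2 / (s' u * s' (u + unitv i))
                             = inverse (lam * mu) * \<alpha> i u)))"
  proof (intro allI impI)
    fix s :: "int^'m \<Rightarrow> real"
    assume H: "(\<forall>u. s u \<noteq> 0) \<and> ratio_cond f s"
    then have snz: "\<forall>u. s u \<noteq> 0" and rs: "ratio_cond f s" by auto
    have A1: "\<forall>i j u. i \<noteq> j \<longrightarrow> (norm (f (u + unitv j + unitv i) - f (u + unitv j)))\<^sup>2 / (s (u + unitv j) * s (u + unitv j + unitv i))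
       = (norm (f (u + unitv i) - f u))\<^sup>2 / (s u * s (u + unitv i))"
      using edge_label[OF circ snz rs] by blast
    have A2: "\<forall>i u. (norm (f (u + unitv i) - f u))\<^sup>2 = (norm (f (u + unitv i) - f u))\<^sup>2 / (s u * s (u + unitv i)) * s u * s (u + unitv i)"
      using snz by simp
    have A3: "\<forall>lam mu. lam \<noteq> 0 \<and> mu \<noteq> 0 \<longrightarrow>
                   (\<forall>i u. (norm (f (u + unitv i) - f u))\<^sup>2 / (((if black u then lam else mu) * s u) * ((if black (u + unitv i) then lam else mu) * s (u + unitv i)))
                             = inverse (lam * mu) * ((norm (f (u + unitv i) - f u))\<^sup>2 / (s u * s (u + unitv i))))"
    proof (intro allI impI)
      fix lam mu :: real and i u assume lm: "lam \<noteq> 0 \<and> mu \<noteq> 0"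
      have "((if black u then lam else mu) * s u) * ((if black (u + unitv i) then lam else mu) * s (u + unitv i))
          = (lam * mu) * (s u * s (u + unitv i))"
        by (simp add: black_add_unitv)
      then show "(norm (f (u + unitv i) - f u))\<^sup>2 / (((if black u then lam else mu) * s u) * ((if black (u + unitv i) then lam else mu) * s (u + unitv i)))
                             = inverse (lam * mu) * ((norm (f (u + unitv i) - f u))\<^sup>2 / (s u * s (u + unitv i)))"
        using lm snz by (simp add: field_simps)
    qed
    show "let \<alpha> = (\<lambda>i u. (norm (f (u + unitv i) - f u))\<^sup>2 / (s u * s (u + unitv i)))
             in (\<forall>i j u. i \<noteq> j \<longrightarrow> \<alpha> i (u + unitv j) = \<alpha> i u)
              \<and> (\<forall>i u. (norm (f (u + unitv i) - f u))\<^sup>2 = \<alpha> i u * s u * s (u + unitv i))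
              \<and> (\<forall>lam mu. lam \<noteq> 0 \<and> mu \<noteq> 0 \<longrightarrow>
                   (let s' = (\<lambda>u. (if black u then lam else mu) * s u)
                    in \<forall>i u. (norm (f (u + unitv i) - f u))\<^sup>2 / (s' u * s' (u + unitv i))
                             = inverse (lam * mu) * \<alpha> i u))"
      unfolding Let_def using A1 A2 A3 by blast
  qed
  show ?thesis using nunz nrc P1 P2 by blast
qed

end
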